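(* For any geodetic simple connected graph $G$ with at least one edge, $src(G)=\chi'(G)$. Moreover, an edge coloring $f$ of $G$ strongly rainbow connects $G$ if and only if $f$ is a proper coloring of the vertices of $H(G)$.
   Context: A graph is geodetic if every pair of distinct vertices is joined by a unique shortest path. An edge coloring of $G$ is any function $f:E(G)\to\{1,\dots,k\}$, $k\in\mathbb{N}$ (adjacent edges may share a color). A path is rainbow with respect to $f$ if its edges receive pairwise distinct colors. $f$ strongly rainbow connects $G$ if for every pair of distinct vertices $u,v$ there is a shortest $(u,v)$-path that is rainbow; $src(G)$ is the minimum $k$ for which such an $f$ exists. For distinct $u_1,u_2\in V(G)$, an edge $e$ separates $u_1,u_2$ if $e$ lies on every shortest $(u_1,u_2)$-path. The auxiliary graph $H(G)$ has vertex set $E(G)$, and distinct $e_1,e_2$ are adjacent in $H(G)$ iff some pair of distinct vertices of $G$ is separated by both $e_1$ and $e_2$. $\chi'(G)=\chi(H(G))$. An edge coloring of $G$ is regarded as a coloring of the vertices of $H(G)$ since $V(H(G))=E(G)$. *)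

theory Defs
  imports Main
begin

definition simple_graph :: "'a set \<Rightarrow> 'a set set \<Rightarrow> bool" where
  "simple_graph V E \<longleftrightarrow> finite V \<and> (\<forall>e\<in>E. e \<subseteq> V \<and> card e = 2)"

definition walk :: "'a set \<Rightarrow> 'a set set \<Rightarrow> 'a list \<Rightarrow> bool" where
  "walk V E p \<longleftrightarrow> p \<noteq> [] \<and> set p \<subseteq> V \<and>
     (\<forall>i. Suc i < length p \<longrightarrow> {p ! i, p ! Suc i} \<in> E)"

definition walk_edges :: "'a list \<Rightarrow> 'a set list" where
  "walk_edges p = map (\<lambda>i. {p ! i, p ! Suc i}) [0..<length p - 1]"

definition walk_betw :: "'a set \<Rightarrow> 'a set set \<Rightarrow> 'a \<Rightarrow> 'a \<Rightarrow> 'a list \<Rightarrow> bool" where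
  "walk_betw V E u v p \<longleftrightarrow> walk V E p \<and> hd p = u \<and> last p = v"

text \<open>A shortest (u,v)-path: a (u,v)-walk of minimum length (such a walk is automatically a path).\<close>
definition shortest_path :: "'a set \<Rightarrow> 'a set set \<Rightarrow> 'a \<Rightarrow> 'a \<Rightarrow> 'a list \<Rightarrow> bool" where
  "shortest_path V E u v p \<longleftrightarrow> walk_betw V E u v p \<and>
     (\<forall>q. walk_betw V E u v q \<longrightarrow> length p \<le> length q)"

definition connected_graph :: "'a set \<Rightarrow> 'a set set \<Rightarrow> bool" where
  "connected_graph V E \<longleftrightarrow> (\<forall>u\<in>V. \<forall>v\<in>V. \<exists>p. walk_betw V E u v p)"

definition geodetic :: "'a set \<Rightarrow> 'a set set \<Rightarrow> bool" where
  "geodetic V E \<longleftrightarrow> (\<forall>u\<in>V. \<forall>v\<in>V. u \<noteq> v \<longrightarrow> (\<exists>!p. shortest_path V E u v p))"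

definition edge_coloring :: "'a set set \<Rightarrow> nat \<Rightarrow> ('a set \<Rightarrow> nat) \<Rightarrow> bool" where
  "edge_coloring E k f \<longleftrightarrow> (\<forall>e\<in>E. f e \<in> {1..k})"

definition rainbow :: "('a set \<Rightarrow> nat) \<Rightarrow> 'a list \<Rightarrow> bool" where
  "rainbow f p \<longleftrightarrow> distinct (map f (walk_edges p))"

definition strongly_rainbow_connects :: "'a set \<Rightarrow> 'a set set \<Rightarrow> ('a set \<Rightarrow> nat) \<Rightarrow> bool" where
  "strongly_rainbow_connects V E f \<longleftrightarrow>
     (\<forall>u\<in>V. \<forall>v\<in>V. u \<noteq> v \<longrightarrow> (\<exists>p. shortest_path V E u v p \<and> rainbow f p))"

definition src :: "'a set \<Rightarrow> 'a set set \<Rightarrow> nat" where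
  "src V E = (LEAST k. \<exists>f. edge_coloring E k f \<and> strongly_rainbow_connects V E f)"

definition separates :: "'a set \<Rightarrow> 'a set set \<Rightarrow> 'a set \<Rightarrow> 'a \<Rightarrow> 'a \<Rightarrow> bool" where
  "separates V E e u1 u2 \<longleftrightarrow> (\<forall>p. shortest_path V E u1 u2 p \<longrightarrow> e \<in> set (walk_edges p))"

definition H_adj :: "'a set \<Rightarrow> 'a set set \<Rightarrow> 'a set \<Rightarrow> 'a set \<Rightarrow> bool" where
  "H_adj V E e1 e2 \<longleftrightarrow> e1 \<in> E \<and> e2 \<in> E \<and> e1 \<noteq> e2 \<and>
     (\<exists>u1\<in>V. \<exists>u2\<in>V. u1 \<noteq> u2 \<and> separates V E e1 u1 u2 \<and> separates V E e2 u1 u2)"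

definition proper_H_coloring :: "'a set \<Rightarrow> 'a set set \<Rightarrow> ('a set \<Rightarrow> nat) \<Rightarrow> bool" where
  "proper_H_coloring V E f \<longleftrightarrow> (\<forall>e1 e2. H_adj V E e1 e2 \<longrightarrow> f e1 \<noteq> f e2)"

definition chi' :: "'a set \<Rightarrow> 'a set set \<Rightarrow> nat" where
  "chi' V E = (LEAST k. \<exists>f. edge_coloring E k f \<and> proper_H_coloring V E f)"

end

theory Submission
  imports Defs
begin

lemma walk_edges_length: "length (walk_edges p) = length p - 1"
  by (simp add: walk_edges_def)

lemma walk_edges_nth: "i < length p - 1 \<Longrightarrow> walk_edges p ! i = {p ! i, p ! Suc i}"
  by (simp add: walk_edges_def)

lemma walk_edges_in_E:
  assumes "walk V E p" "e \<in> set (walk_edges p)" shows "e \<in> E"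
proof -
  from assms(2) obtain i where "i < length p - 1" "e = {p ! i, p ! Suc i}"
    by (auto simp: walk_edges_def)
  with assms(1) show ?thesis by (auto simp: walk_def)
qed

lemma shortest_distinct:
  assumes sp: "shortest_path V E u v p" shows "distinct p"
proof (rule ccontr)
  assume "\<not> distinct p"
  then obtain i j where ij: "i < j" "j < length p" "p ! i = p ! j"
    by (metis distinct_conv_nth linorder_neqE_nat)
  define q where "q = take i p @ drop j p"
  have lq: "length q = i + (length p - j)" using ij by (simp add: q_def)
  have qn: "\<And>k. k < length q \<Longrightarrow> q ! k = (if k < i then p ! k else p ! (j + (k - i)))"
    using ij by (auto simp: q_def nth_append lq)
  have w: "walk V E p" "hd p = u" "last p = v" using sp by (auto simp: shortest_path_def walk_betw_def)
  have "walk V E q"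
    unfolding walk_def
  proof (intro conjI allI impI)
    show "q \<noteq> []" using lq ij by auto
    show "set q \<subseteq> V" using w(1) unfolding walk_def q_def
      by (auto dest: in_set_takeD in_set_dropD)
  next
    fix k assume k: "Suc k < length q"
    show "{q ! k, q ! Suc k} \<in> E"
    proof (cases "Suc k < i")
      case True
      then show ?thesis using qn[of k] qn[of "Suc k"] k w(1) ij unfolding walk_def by auto
    next
      case False
      show ?thesis
      proof (cases "Suc k = i")
        case True
        then have "q ! k = p ! k" "q ! Suc k = p ! Suc k"
          using qn[of k] qn[of "Suc k"] k ij by auto
        moreover have "Suc k < length p" using ij True by simp
        then have "{p ! k, p ! Suc k} \<in> E" using w(1) unfolding walk_def by blast
        ultimately show ?thesis by simp
      next
        case False2: False
        then have ik: "i \<le> k" using False by simp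
        have "q ! k = p ! (j + (k - i))" using qn[of k] k ik by auto
        moreover have "q ! Suc k = p ! (j + (Suc k - i))" using qn[of "Suc k"] k ik by auto
        moreover have "j + (Suc k - i) = Suc (j + (k - i))" using ik by simp
        ultimately have "q ! k = p ! (j + (k - i))" "q ! Suc k = p ! Suc (j + (k - i))" by simp_all
        moreover have "Suc (j + (k - i)) < length p" using k lq False False2 ij by auto
        ultimately show ?thesis using w(1) unfolding walk_def by auto
      qed
    qed
  qed
  moreover have "hd q = u"
  proof -
    have "q \<noteq> []" using lq ij by (metis add_gr_0 length_greater_0_conv zero_less_diff)
    then have "hd q = q ! 0" by (simp add: hd_conv_nth)
    also have "\<dots> = p ! 0" using qn[of 0] lq ij by auto
    also have "\<dots> = u" using w ij by (metis hd_conv_nth list.size(3) not_less0)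
    finally show ?thesis .
  qed
  moreover have "last q = v"
  proof -
    have "q \<noteq> []" using lq ij by (metis add_gr_0 length_greater_0_conv zero_less_diff)
    then have "last q = q ! (length q - 1)" by (simp add: last_conv_nth)
    also have "\<dots> = p ! (length p - 1)" using qn[of "length q - 1"] lq ij by auto
    also have "\<dots> = v" using w ij by (metis last_conv_nth list.size(3) not_less0)
    finally show ?thesis .
  qed
  ultimately have "walk_betw V E u v q" by (simp add: walk_betw_def)
  then have "length p \<le> length q" using sp by (simp add: shortest_path_def)
  then show False using lq ij by auto
qed

lemma shortest_edges_distinct:
  assumes sp: "shortest_path V E u v p" shows "distinct (walk_edges p)"
proof -
  have d: "distinct p" by (rule shortest_distinct[OF sp])
  show ?thesis
    unfolding distinct_conv_nth walk_edges_length
  proof (intro allI impI)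
    fix i j assume a: "i < length p - 1" "j < length p - 1" "i \<noteq> j"
    show "walk_edges p ! i \<noteq> walk_edges p ! j"
    proof
      assume "walk_edges p ! i = walk_edges p ! j"
      then have eq: "{p ! i, p ! Suc i} = {p ! j, p ! Suc j}" using a by (simp add: walk_edges_nth)
      have inj: "\<And>x y. x < length p \<Longrightarrow> y < length p \<Longrightarrow> p ! x = p ! y \<Longrightarrow> x = y"
        using d by (simp add: nth_eq_iff_index_eq)
      from eq have "p ! i = p ! j \<or> p ! i = p ! Suc j" by blast
      moreover from eq have "p ! j = p ! i \<or> p ! j = p ! Suc i" by blast
      moreover have b: "i < length p" "j < length p" "Suc i < length p" "Suc j < length p" using a by auto
      moreover have c: "p ! i \<noteq> p ! j" using inj b a by blast
      ultimately have "p ! i = p ! Suc j" "p ! j = p ! Suc i" by auto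
      then have "i = Suc j" "j = Suc i" using inj b by blast+
      then show False by simp
    qed
  qed
qed

lemma equiv_src_proper:
  assumes geo: "geodetic V E"
  shows "strongly_rainbow_connects V E f \<longleftrightarrow> proper_H_coloring V E f"
proof
  assume s: "strongly_rainbow_connects V E f"
  show "proper_H_coloring V E f"
    unfolding proper_H_coloring_def
  proof (intro allI impI)
    fix e1 e2 assume "H_adj V E e1 e2"
    then obtain u1 u2 where h: "e1 \<noteq> e2" "u1 \<in> V" "u2 \<in> V" "u1 \<noteq> u2"
      "separates V E e1 u1 u2" "separates V E e2 u1 u2" unfolding H_adj_def by blast
    obtain p where p: "shortest_path V E u1 u2 p" "rainbow f p" using s h unfolding strongly_rainbow_connects_def by blast
    have "e1 \<in> set (walk_edges p)" "e2 \<in> set (walk_edges p)" using h p unfolding separates_def by auto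
    moreover have "inj_on f (set (walk_edges p))" using p(2) by (simp add: rainbow_def distinct_map)
    ultimately show "f e1 \<noteq> f e2" using h(1) by (meson inj_on_def)
  qed
next
  assume pr: "proper_H_coloring V E f"
  show "strongly_rainbow_connects V E f"
    unfolding strongly_rainbow_connects_def
  proof (intro ballI impI)
    fix u v assume uv: "u \<in> V" "v \<in> V" "u \<noteq> v"
    then obtain p where p: "shortest_path V E u v p" and uq: "\<And>q. shortest_path V E u v q \<Longrightarrow> q = p"
      using geo unfolding geodetic_def by metis
    have wp: "walk V E p" using p by (simp add: shortest_path_def walk_betw_def)
    have "inj_on f (set (walk_edges p))"
    proof (rule inj_onI, rule ccontr)
      fix x y assume xy: "x \<in> set (walk_edges p)" "y \<in> set (walk_edges p)" "f x = f y" "x \<noteq> y"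
      have "separates V E x u v" "separates V E y u v" using xy uq unfolding separates_def by auto
      then have "H_adj V E x y" unfolding H_adj_def using xy uv walk_edges_in_E[OF wp] by blast
      then show False using pr xy(3) unfolding proper_H_coloring_def by blast
    qed
    then have "rainbow f p" using shortest_edges_distinct[OF p] by (simp add: rainbow_def distinct_map)
    then show "\<exists>p. shortest_path V E u v p \<and> rainbow f p" using p by blast
  qed
qed

theorem theorem2:
  fixes V :: "'a set" and E :: "'a set set"
  assumes "simple_graph V E" and "connected_graph V E" and "geodetic V E" and "E \<noteq> {}"
  shows "src V E = chi' V E \<and>
    (\<forall>f k. edge_coloring E k f \<longrightarrow>
       (strongly_rainbow_connects V E f \<longleftrightarrow> proper_H_coloring V E f))"
  using equiv_src_proper[OF assms(3)] by (simp add: src_def chi'_def)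

end
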